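(* Let $1<p<\infty$. Then the Banach space $\ell_p$ has the weak Cauchy subsequence property of order $p$ if and only if $p\ge 2$.
   Context: For $p\in[1,\infty]$, a sequence $(x_n)$ in a locally convex space $E$ is weakly $p$-summable if for every $\chi\in E'$ the sequence $(\chi(x_n))_n$ lies in $\ell_p$ (if $p<\infty$) or in $c_0$ (if $p=\infty$). A sequence $(x_n)$ is weakly $p$-Cauchy if for every pair of strictly increasing sequences $(k_n),(j_n)$ in $\omega=\{0,1,2,\dots\}$ the sequence $(x_{k_n}-x_{j_n})_n$ is weakly $p$-summable. $E$ has the weak Cauchy subsequence property of order $p$ ($wCSP_p$) if every bounded sequence in $E$ has a weakly $p$-Cauchy subsequence. *)

theory Defs
  imports "HOL-Analysis.Analysis"
begin

definition lp :: "real \<Rightarrow> (nat \<Rightarrow> real) set" where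
  "lp p = {x. summable (\<lambda>i. \<bar>x i\<bar> powr p)}"

definition lp_norm :: "real \<Rightarrow> (nat \<Rightarrow> real) \<Rightarrow> real" where
  "lp_norm p x = (\<Sum>i. \<bar>x i\<bar> powr p) powr (1 / p)"

text \<open>The topological dual of l_p: continuous (= bounded) linear functionals on l_p.
  Only the values on l_p matter.\<close>

definition lp_dual :: "real \<Rightarrow> ((nat \<Rightarrow> real) \<Rightarrow> real) set" where
  "lp_dual p = {\<phi>.
     (\<forall>x\<in>lp p. \<forall>y\<in>lp p. \<phi> (\<lambda>i. x i + y i) = \<phi> x + \<phi> y) \<and>
     (\<forall>c. \<forall>x\<in>lp p. \<phi> (\<lambda>i. c * x i) = c * \<phi> x) \<and>
     (\<exists>C. \<forall>x\<in>lp p. \<bar>\<phi> x\<bar> \<le> C * lp_norm p x)}"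

definition weakly_summable :: "real \<Rightarrow> real \<Rightarrow> (nat \<Rightarrow> nat \<Rightarrow> real) \<Rightarrow> bool" where
  "weakly_summable p q x \<longleftrightarrow> (\<forall>\<phi>\<in>lp_dual p. summable (\<lambda>n. \<bar>\<phi> (x n)\<bar> powr q))"

definition weakly_Cauchy :: "real \<Rightarrow> real \<Rightarrow> (nat \<Rightarrow> nat \<Rightarrow> real) \<Rightarrow> bool" where
  "weakly_Cauchy p q x \<longleftrightarrow>
     (\<forall>k j. strict_mono k \<longrightarrow> strict_mono j \<longrightarrow>
        weakly_summable p q (\<lambda>n i. x (k n) i - x (j n) i))"

definition lp_wCSP :: "real \<Rightarrow> real \<Rightarrow> bool" where
  "lp_wCSP p q \<longleftrightarrow>
     (\<forall>x :: nat \<Rightarrow> nat \<Rightarrow> real. (\<forall>n. x n \<in> lp p) \<longrightarrow> (\<exists>M. \<forall>n. lp_norm p (x n) \<le> M) \<longrightarrow>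
        (\<exists>r :: nat \<Rightarrow> nat. strict_mono r \<and> weakly_Cauchy p q (x \<circ> r)))"

end

theory Submission
  imports Defs "HOL-Library.Diagonal_Subsequence"
begin

definition psum :: "real \<Rightarrow> (nat \<Rightarrow> real) \<Rightarrow> real" where
  "psum p x = (\<Sum>i. \<bar>x i\<bar> powr p)"

lemma lp_norm_psum: "lp_norm p x = psum p x powr (1/p)"
  by (simp add: lp_norm_def psum_def)

lemma psum_nonneg: "x \<in> lp p \<Longrightarrow> 0 \<le> psum p x"
  unfolding psum_def lp_def by (auto intro!: suminf_nonneg)

lemma powr_diff_le:
  fixes a b :: real assumes "p > 0"
  shows "\<bar>a - b\<bar> powr p \<le> 2 powr p * (\<bar>a\<bar> powr p + \<bar>b\<bar> powr p)"
proof -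
  have "\<bar>a - b\<bar> \<le> 2 * max \<bar>a\<bar> \<bar>b\<bar>" by linarith
  hence "\<bar>a - b\<bar> powr p \<le> (2 * max \<bar>a\<bar> \<bar>b\<bar>) powr p"
    using assms by (intro powr_mono2) auto
  also have "\<dots> = 2 powr p * max \<bar>a\<bar> \<bar>b\<bar> powr p"
    by (simp add: powr_mult)
  also have "max \<bar>a\<bar> \<bar>b\<bar> powr p \<le> \<bar>a\<bar> powr p + \<bar>b\<bar> powr p"
    by (cases "\<bar>a\<bar> \<le> \<bar>b\<bar>") (auto simp: max_def)
  finally show ?thesis by (simp add: mult_left_mono)
qed

lemma powr_add_le:
  fixes a b :: real assumes "p > 0"
  shows "\<bar>a + b\<bar> powr p \<le> 2 powr p * (\<bar>a\<bar> powr p + \<bar>b\<bar> powr p)"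
  using powr_diff_le[OF assms, of a "-b"] by simp

lemma lp_add:
  assumes p: "p > 0" and x: "x \<in> lp p" and y: "y \<in> lp p"
  shows "(\<lambda>i. x i + y i) \<in> lp p"
    and "psum p (\<lambda>i. x i + y i) \<le> 2 powr p * (psum p x + psum p y)"
proof -
  have sx: "summable (\<lambda>i. \<bar>x i\<bar> powr p)" and sy: "summable (\<lambda>i. \<bar>y i\<bar> powr p)"
    using x y by (auto simp: lp_def)
  have s: "summable (\<lambda>i. 2 powr p * (\<bar>x i\<bar> powr p + \<bar>y i\<bar> powr p))"
    by (intro summable_mult summable_add sx sy)
  have s2: "summable (\<lambda>i. \<bar>x i + y i\<bar> powr p)"
    by (rule summable_comparison_test'[OF s, of 0]) (use powr_add_le[OF p] in auto)
  thus "(\<lambda>i. x i + y i) \<in> lp p" by (simp add: lp_def)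
  have "psum p (\<lambda>i. x i + y i) \<le> (\<Sum>i. 2 powr p * (\<bar>x i\<bar> powr p + \<bar>y i\<bar> powr p))"
    unfolding psum_def by (intro suminf_le s s2 powr_add_le p)
  also have "\<dots> = 2 powr p * (psum p x + psum p y)"
    by (simp add: psum_def suminf_mult[OF summable_add[OF sx sy]] suminf_add[OF sx sy])
  finally show "psum p (\<lambda>i. x i + y i) \<le> 2 powr p * (psum p x + psum p y)" .
qed

lemma lp_scale:
  assumes x: "x \<in> lp p"
  shows "(\<lambda>i. c * x i) \<in> lp p" and "psum p (\<lambda>i. c * x i) = \<bar>c\<bar> powr p * psum p x"
proof -
  have sx: "summable (\<lambda>i. \<bar>x i\<bar> powr p)" using x by (auto simp: lp_def)
  have e: "\<And>i. \<bar>c * x i\<bar> powr p = \<bar>c\<bar> powr p * \<bar>x i\<bar> powr p"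
    by (simp add: abs_mult powr_mult)
  show "(\<lambda>i. c * x i) \<in> lp p" using summable_mult[OF sx] by (simp add: lp_def e)
  show "psum p (\<lambda>i. c * x i) = \<bar>c\<bar> powr p * psum p x"
    by (simp add: psum_def e suminf_mult[OF sx])
qed

lemma lp_diff:
  assumes p: "p > 0" and x: "x \<in> lp p" and y: "y \<in> lp p"
  shows "(\<lambda>i. x i - y i) \<in> lp p"
    and "psum p (\<lambda>i. x i - y i) \<le> 2 powr p * (psum p x + psum p y)"
proof -
  have my: "(\<lambda>i. (-1) * y i) \<in> lp p" "psum p (\<lambda>i. (-1) * y i) = psum p y"
    using lp_scale[OF y, of "-1"] by auto
  show "(\<lambda>i. x i - y i) \<in> lp p" using lp_add(1)[OF p x my(1)] by simp
  show "psum p (\<lambda>i. x i - y i) \<le> 2 powr p * (psum p x + psum p y)"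
    using lp_add(2)[OF p x my(1)] my(2) by simp
qed

lemma lp_zero: "(\<lambda>i. 0) \<in> lp p"
  by (simp add: lp_def)

lemma lp_finite:
  assumes "\<And>i. i \<ge> N \<Longrightarrow> x i = 0" and p: "p > 0"
  shows "x \<in> lp p" and "psum p x = (\<Sum>i<N. \<bar>x i\<bar> powr p)"
proof -
  have z: "\<And>i. i \<notin> {..<N} \<Longrightarrow> \<bar>x i\<bar> powr p = 0" using assms by auto
  show "x \<in> lp p" unfolding lp_def using sums_finite[of "{..<N}", OF _ z]
    by (auto simp: sums_iff)
  show "psum p x = (\<Sum>i<N. \<bar>x i\<bar> powr p)" unfolding psum_def
    using suminf_finite[of "{..<N}", OF _ z] by auto
qed

lemma psum_term_le: "x \<in> lp p \<Longrightarrow> \<bar>x i\<bar> powr p \<le> psum p x"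
  unfolding psum_def lp_def
  using sum_le_suminf[of "\<lambda>i. \<bar>x i\<bar> powr p" "{i}"] by auto

lemma psum_partial_le: "x \<in> lp p \<Longrightarrow> (\<Sum>i<N. \<bar>x i\<bar> powr p) \<le> psum p x"
  unfolding psum_def lp_def
  using sum_le_suminf[of "\<lambda>i. \<bar>x i\<bar> powr p" "{..<N}"] by auto

lemma dual_diff:
  assumes p: "p > 0" and "\<phi> \<in> lp_dual p" and a: "a \<in> lp p" and b: "b \<in> lp p"
  shows "\<phi> (\<lambda>i. a i - b i) = \<phi> a - \<phi> b"
proof -
  have add: "\<forall>x\<in>lp p. \<forall>y\<in>lp p. \<phi> (\<lambda>i. x i + y i) = \<phi> x + \<phi> y"
    and sc: "\<forall>c. \<forall>x\<in>lp p. \<phi> (\<lambda>i. c * x i) = c * \<phi> x"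
    using assms(2) by (auto simp: lp_dual_def)
  have mb: "(\<lambda>i. (-1) * b i) \<in> lp p" using lp_scale(1)[OF b] .
  have "\<phi> (\<lambda>i. a i - b i) = \<phi> (\<lambda>i. a i + (-1) * b i)" by simp
  also have "\<dots> = \<phi> a + \<phi> (\<lambda>i. (-1) * b i)" by (rule add[rule_format, OF a mb])
  also have "\<phi> (\<lambda>i. (-1) * b i) = - \<phi> b" using sc[rule_format, OF b, of "-1"] by simp
  finally show ?thesis by simp
qed

lemma dual_bound:
  assumes "\<phi> \<in> lp_dual p"
  obtains C where "C \<ge> 0" "\<And>x. x \<in> lp p \<Longrightarrow> \<bar>\<phi> x\<bar> \<le> C * psum p x powr (1/p)"
proof -
  obtain C where C: "\<forall>x\<in>lp p. \<bar>\<phi> x\<bar> \<le> C * lp_norm p x"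
    using assms by (auto simp: lp_dual_def)
  show ?thesis
  proof (rule that[of "max C 0"])
    fix x assume x: "x \<in> lp p"
    have "\<bar>\<phi> x\<bar> \<le> C * psum p x powr (1/p)" using C x by (simp add: lp_norm_psum)
    also have "\<dots> \<le> max C 0 * psum p x powr (1/p)"
      by (intro mult_right_mono) auto
    finally show "\<bar>\<phi> x\<bar> \<le> max C 0 * psum p x powr (1/p)" .
  qed auto
qed

lemma dual_sum:
  fixes b :: "nat \<Rightarrow> nat \<Rightarrow> real" and N :: nat
  assumes p: "p > 0" and "\<phi> \<in> lp_dual p" and b: "\<And>n. b n \<in> lp p"
  shows "(\<lambda>i. \<Sum>n<N. t n * b n i) \<in> lp p \<and> \<phi> (\<lambda>i. \<Sum>n<N. t n * b n i) = (\<Sum>n<N. t n * \<phi> (b n))"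
proof (induction N)
  case 0
  have sc: "\<forall>c. \<forall>x\<in>lp p. \<phi> (\<lambda>i. c * x i) = c * \<phi> x"
    using assms(2) by (auto simp: lp_dual_def)
  then have "\<phi> (\<lambda>i. 0 * 0) = 0 * \<phi> (\<lambda>i. 0)" using sc[rule_format, OF lp_zero[of p], of 0] by simp
  then show ?case by (simp add: lp_zero)
next
  case (Suc N)
  have add: "\<forall>x\<in>lp p. \<forall>y\<in>lp p. \<phi> (\<lambda>i. x i + y i) = \<phi> x + \<phi> y"
    and sc: "\<forall>c. \<forall>x\<in>lp p. \<phi> (\<lambda>i. c * x i) = c * \<phi> x"
    using assms(2) by (auto simp: lp_dual_def)
  have m: "(\<lambda>i. t N * b N i) \<in> lp p" using lp_scale(1)[OF b] .
  have "(\<lambda>i. \<Sum>n<Suc N. t n * b n i) = (\<lambda>i. (\<Sum>n<N. t n * b n i) + t N * b N i)" by simp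
  moreover have "(\<lambda>i. (\<Sum>n<N. t n * b n i) + t N * b N i) \<in> lp p"
    using lp_add(1)[OF p _ m] Suc.IH by blast
  moreover have "\<phi> (\<lambda>i. (\<Sum>n<N. t n * b n i) + t N * b N i) = (\<Sum>n<N. t n * \<phi> (b n)) + t N * \<phi> (b N)"
    using add Suc.IH m sc b by auto
  ultimately show ?case by simp
qed


lemma young_sum:
  fixes p q :: real and c x :: "nat \<Rightarrow> real"
  assumes p: "1 < p" and q: "q = p / (p - 1)"
    and c: "summable (\<lambda>i. \<bar>c i\<bar> powr q)" and x: "summable (\<lambda>i. \<bar>x i\<bar> powr p)"
  shows "summable (\<lambda>i. \<bar>c i\<bar> * \<bar>x i\<bar>)"
    and "(\<Sum>i. \<bar>c i\<bar> * \<bar>x i\<bar>) \<le> (\<Sum>i. \<bar>c i\<bar> powr q) / q + (\<Sum>i. \<bar>x i\<bar> powr p) / p"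
proof -
  have p1: "p - 1 > 0" using p by simp
  have q1: "q > 1" using p q p1 by (simp add: less_divide_eq)
  have pq: "1/q + 1/p = 1" using p p1 q1 q by (auto simp: divide_simps algebra_simps)
  have Y: "\<And>i. \<bar>c i\<bar> * \<bar>x i\<bar> \<le> \<bar>c i\<bar> powr q / q + \<bar>x i\<bar> powr p / p"
    using Youngs_inequality[OF q1 p pq] by simp
  have s: "summable (\<lambda>i. \<bar>c i\<bar> powr q / q + \<bar>x i\<bar> powr p / p)"
    by (intro summable_add summable_divide c x)
  show s2: "summable (\<lambda>i. \<bar>c i\<bar> * \<bar>x i\<bar>)"
    by (rule summable_comparison_test'[OF s, of 0]) (use Y in auto)
  have "(\<Sum>i. \<bar>c i\<bar> * \<bar>x i\<bar>) \<le> (\<Sum>i. \<bar>c i\<bar> powr q / q + \<bar>x i\<bar> powr p / p)"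
    by (intro suminf_le s s2 Y)
  also have "\<dots> = (\<Sum>i. \<bar>c i\<bar> powr q) / q + (\<Sum>i. \<bar>x i\<bar> powr p) / p"
    by (subst suminf_add[OF summable_divide[OF c] summable_divide[OF x], symmetric])
       (simp add: suminf_divide[OF c] suminf_divide[OF x])
  finally show "(\<Sum>i. \<bar>c i\<bar> * \<bar>x i\<bar>) \<le> (\<Sum>i. \<bar>c i\<bar> powr q) / q + (\<Sum>i. \<bar>x i\<bar> powr p) / p" .
qed

lemma seq_dual:
  fixes p q :: real and c :: "nat \<Rightarrow> real"
  assumes p: "1 < p" and q: "q = p / (p - 1)"
    and c: "summable (\<lambda>i. \<bar>c i\<bar> powr q)"
  shows "(\<lambda>x. \<Sum>i. c i * x i) \<in> lp_dual p"
proof -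
  have summa: "summable (\<lambda>i. \<bar>c i * x i\<bar>)" if "x \<in> lp p" for x
    using young_sum(1)[OF p q c] that by (auto simp: lp_def abs_mult)
  have summ: "summable (\<lambda>i. c i * x i)" if "x \<in> lp p" for x
    using summa[OF that] by (rule summable_rabs_cancel)
  define A where "A = (\<Sum>i. \<bar>c i\<bar> powr q)"
  have bound: "\<bar>\<Sum>i. c i * x i\<bar> \<le> (A / q + 1 / p) * lp_norm p x" if x: "x \<in> lp p" for x
  proof -
    have sx: "summable (\<lambda>i. \<bar>x i\<bar> powr p)" using x by (simp add: lp_def)
    define S where "S = psum p x"
    have S0: "S \<ge> 0" using psum_nonneg[OF x] by (simp add: S_def)
    define N where "N = S powr (1/p)"
    have N: "lp_norm p x = N" by (simp add: N_def S_def lp_norm_psum)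
    show ?thesis
    proof (cases "S = 0")
      case True
      hence "\<forall>i. \<bar>x i\<bar> powr p = 0"
        using suminf_eq_zero_iff[OF sx] by (simp add: S_def psum_def)
      hence "\<And>i. x i = 0" by simp
      thus ?thesis using N by (simp add: N_def True)
    next
      case False
      hence S1: "S > 0" using S0 by simp
      hence N0: "N > 0" by (simp add: N_def)
      have NS: "N powr p = S" using S1 p by (simp add: N_def powr_powr)
      define y where "y i = x i / N" for i
      have ey: "\<bar>y i\<bar> powr p = \<bar>x i\<bar> powr p / S" for i
        using N0 NS by (simp add: y_def powr_divide)
      have sy: "summable (\<lambda>i. \<bar>y i\<bar> powr p)" unfolding ey by (intro summable_divide sx)
      have py: "(\<Sum>i. \<bar>y i\<bar> powr p) = 1" unfolding ey
        using S1 by (simp add: suminf_divide[OF sx] S_def psum_def)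
      have scy: "summable (\<lambda>i. \<bar>c i\<bar> * \<bar>y i\<bar>)" using young_sum(1)[OF p q c sy] .
      have "\<bar>\<Sum>i. c i * x i\<bar> \<le> (\<Sum>i. \<bar>c i * x i\<bar>)"
        by (rule summable_rabs[OF summa[OF x]])
      also have "(\<Sum>i. \<bar>c i * x i\<bar>) = (\<Sum>i. N * (\<bar>c i\<bar> * \<bar>y i\<bar>))"
        using N0 by (simp add: y_def abs_mult)
      also have "\<dots> = N * (\<Sum>i. \<bar>c i\<bar> * \<bar>y i\<bar>)" by (simp add: suminf_mult[OF scy])
      also have "\<dots> \<le> N * (A / q + 1 / p)"
        using young_sum(2)[OF p q c sy] N0 py by (simp add: A_def)
      finally show ?thesis using N by (simp add: mult.commute)
    qed
  qed
  show ?thesis unfolding lp_dual_def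
  proof (intro CollectI conjI ballI allI exI)
    fix x y assume x: "x \<in> lp p" and y: "y \<in> lp p"
    show "(\<Sum>i. c i * (x i + y i)) = (\<Sum>i. c i * x i) + (\<Sum>i. c i * y i)"
      using suminf_add[OF summ[OF x] summ[OF y]] by (simp add: distrib_left)
  next
    fix a x assume x: "x \<in> lp p"
    show "(\<Sum>i. c i * (a * x i)) = a * (\<Sum>i. c i * x i)"
      using suminf_mult[OF summ[OF x], of a] by (simp add: mult.left_commute)
  next
    fix x assume "x \<in> lp p"
    thus "\<bar>\<Sum>i. c i * x i\<bar> \<le> (A / q + 1 / p) * lp_norm p x" by (rule bound)
  qed
qed

lemma summable_shift_powr: "summable (\<lambda>n. (real n + 1) powr s) \<longleftrightarrow> s < -1"
proof -
  have "summable (\<lambda>n. (real n + 1) powr s) \<longleftrightarrow> summable (\<lambda>n. real (Suc n) powr s)"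
    by (simp add: add.commute)
  also have "\<dots> \<longleftrightarrow> summable (\<lambda>n. real n powr s)" by (rule summable_Suc_iff)
  also have "\<dots> \<longleftrightarrow> s < -1" by (rule summable_real_powr_iff)
  finally show ?thesis .
qed

lemma necessity:
  fixes p :: real
  assumes p: "1 < p" and p2: "p < 2"
  shows "\<not> lp_wCSP p p"
proof
  assume W: "lp_wCSP p p"
  define e :: "nat \<Rightarrow> nat \<Rightarrow> real" where "e n = (\<lambda>i. if i = n then 1 else 0)" for n
  have ee: "\<bar>e n i\<bar> powr p = (if i = n then 1 else 0)" for n i by (simp add: e_def)
  have elp: "\<forall>n. e n \<in> lp p" by (simp add: lp_def ee)
  have enorm: "lp_norm p (e n) = 1" for n
    using sums_single[of n "\<lambda>_. 1::real"] by (simp add: lp_norm_def ee sums_iff)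
  obtain r where r: "strict_mono r" and wc: "weakly_Cauchy p p (e \<circ> r)"
    using W elp enorm unfolding lp_wCSP_def by (metis order_refl)
  define q where "q = p / (p - 1)"
  have p1: "p - 1 > 0" using p by simp
  have qp: "q / p > 1" using p p1 p2 by (simp add: q_def divide_simps)
  define \<rho> where "\<rho> n = r (2 * n + 1)" for n
  have rho: "strict_mono \<rho>" unfolding \<rho>_def using r by (simp add: strict_mono_def)
  have injr: "inj r" using r by (rule strict_mono_imp_inj_on)
  have injrho: "inj \<rho>" using rho by (rule strict_mono_imp_inj_on)
  define g where "g n = (real n + 1) powr (-1/p)" for n
  define c where "c i = (if i \<in> range \<rho> then g (inv \<rho> i) else 0)" for i
  have crho: "c (\<rho> n) = g n" for n using injrho by (simp add: c_def)
  have cr: "c (r (2 * n)) = 0" for n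
  proof -
    have "r (2 * n) \<notin> range \<rho>"
    proof
      assume "r (2 * n) \<in> range \<rho>"
      then obtain m where "r (2 * n) = r (2 * m + 1)" by (auto simp: \<rho>_def)
      hence "2 * n = 2 * m + 1" using injr by (simp add: inj_eq)
      thus False by presburger
    qed
    thus ?thesis by (simp add: c_def)
  qed
  have sc: "summable (\<lambda>i. \<bar>c i\<bar> powr q)"
  proof -
    have "summable (\<lambda>n. \<bar>c (\<rho> n)\<bar> powr q)"
    proof -
      have "\<bar>c (\<rho> n)\<bar> powr q = (real n + 1) powr (- (q / p))" for n
        using p by (simp add: crho g_def powr_powr)
      moreover have "summable (\<lambda>n. (real n + 1) powr (- (q / p)))"
        using qp by (simp add: summable_shift_powr)
      ultimately show ?thesis by simp
    qed
    thus ?thesis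
      using summable_mono_reindex[OF rho, of "\<lambda>i. \<bar>c i\<bar> powr q"] by (auto simp: c_def)
  qed
  define \<phi> where "\<phi> = (\<lambda>x::nat\<Rightarrow>real. \<Sum>i. c i * x i)"
  have phi: "\<phi> \<in> lp_dual p" unfolding \<phi>_def using seq_dual[OF p q_def sc] .
  have k: "strict_mono (\<lambda>n::nat. 2 * n + 1)" by (rule strict_monoI) simp
  have j: "strict_mono (\<lambda>n::nat. 2 * n)" by (rule strict_monoI) simp
  have "weakly_summable p p (\<lambda>n i. (e \<circ> r) (2 * n + 1) i - (e \<circ> r) (2 * n) i)"
    using wc k j unfolding weakly_Cauchy_def by blast
  hence S: "summable (\<lambda>n. \<bar>\<phi> (\<lambda>i. (e \<circ> r) (2 * n + 1) i - (e \<circ> r) (2 * n) i)\<bar> powr p)"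
    using phi unfolding weakly_summable_def by blast
  have val: "\<phi> (\<lambda>i. (e \<circ> r) (2 * n + 1) i - (e \<circ> r) (2 * n) i) = g n" for n
  proof -
    have "(\<lambda>i. c i * ((e \<circ> r) (2 * n + 1) i - (e \<circ> r) (2 * n) i)) = (\<lambda>i. if i = \<rho> n then g n else 0)"
    proof
      fix i
      show "c i * ((e \<circ> r) (2 * n + 1) i - (e \<circ> r) (2 * n) i) = (if i = \<rho> n then g n else 0)"
        using crho[of n] cr[of n] by (auto simp: e_def \<rho>_def)
    qed
    thus ?thesis unfolding \<phi>_def using sums_single[of "\<rho> n" "\<lambda>_. g n"] by (simp add: sums_iff)
  qed
  have gg: "\<bar>g n\<bar> powr p = (real n + 1) powr (-1)" for n
    using p by (simp add: g_def powr_powr)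
  have "summable (\<lambda>n. (real n + 1) powr (-1))" using S[unfolded val] unfolding gg .
  thus False by (subst (asm) summable_shift_powr) simp
qed


lemma diag_conv:
  fixes f :: "nat \<Rightarrow> nat \<Rightarrow> real"
  assumes bd: "\<And>i. \<exists>K. \<forall>n. \<bar>f n i\<bar> \<le> K"
  shows "\<exists>r. strict_mono r \<and> (\<forall>i. convergent (\<lambda>n. f (r n) i))"
proof -
  interpret subseqs "\<lambda>i s. convergent (\<lambda>n. f (s n) i)"
  proof
    fix i and s :: "nat \<Rightarrow> nat" assume s: "strict_mono s"
    obtain K where K: "\<forall>n. \<bar>f n i\<bar> \<le> K" using bd by blast
    have "bounded (range (\<lambda>n. f (s n) i))"
      using K by (auto simp: bounded_real)
    then obtain l r' where r': "strict_mono r'" and l: "((\<lambda>n. f (s n) i) \<circ> r') \<longlonglongrightarrow> l"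
      using bounded_imp_convergent_subsequence by blast
    show "\<exists>r'. strict_mono r' \<and> convergent (\<lambda>n. f ((s \<circ> r') n) i)"
      using r' l by (auto simp: convergent_def o_def)
  qed
  have "convergent (\<lambda>n. f (diagseq n) i)" for i
  proof -
    have "convergent (\<lambda>n. f ((diagseq \<circ> (+) (Suc i)) n) i)"
    proof (rule diagseq_holds)
      fix r s n assume "strict_mono (r::nat\<Rightarrow>nat)" "convergent (\<lambda>k. f (s k) n)"
      thus "convergent (\<lambda>k. f ((s \<circ> r) k) n)"
        using convergent_subseq_convergent[of "\<lambda>k. f (s k) n" r] by (simp add: o_def)
    qed
    hence "convergent (\<lambda>n. f (diagseq (n + Suc i)) i)" by (simp add: o_def add.commute)
    thus ?thesis using convergent_ignore_initial_segment[of "\<lambda>n. f (diagseq n) i" "Suc i"] by simp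
  qed
  thus ?thesis using subseq_diagseq by blast
qed

fun iterp :: "(nat \<Rightarrow> nat \<Rightarrow> nat \<Rightarrow> nat \<times> nat) \<Rightarrow> nat \<Rightarrow> nat \<times> nat" where
  "iterp F 0 = F 0 0 0"
| "iterp F (Suc n) = F (Suc n) (fst (iterp F n)) (snd (iterp F n))"

lemma hump:
  fixes G :: "nat \<Rightarrow> nat \<Rightarrow> real" and \<epsilon> :: "nat \<Rightarrow> real"
  assumes summ: "\<And>n. summable (G n)" and null: "\<And>i. (\<lambda>n. G n i) \<longlonglongrightarrow> 0"
    and eps: "\<And>n. \<epsilon> n > 0"
  shows "\<exists>s m. strict_mono s \<and> strict_mono m \<and> m 0 = 0 \<and>
     (\<forall>n. (\<Sum>i<m n. G (s n) i) \<le> \<epsilon> n) \<and> (\<forall>n. (\<Sum>i. G (s n) (i + m (Suc n))) \<le> \<epsilon> n)"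
proof -
  have step: "\<exists>ab. fst ab > a \<and> snd ab > b \<and> (\<Sum>i<b. G (fst ab) i) \<le> \<epsilon> n
      \<and> (\<Sum>i. G (fst ab) (i + snd ab)) \<le> \<epsilon> n" for n a b
  proof -
    have "(\<lambda>k. \<Sum>i<b. G k i) \<longlonglongrightarrow> (\<Sum>i<b. 0)"
      by (intro tendsto_sum null)
    hence "eventually (\<lambda>k. (\<Sum>i<b. G k i) < \<epsilon> n) sequentially"
      using eps[of n] by (intro order_tendstoD(2)) auto
    then obtain N where N: "\<And>k. k \<ge> N \<Longrightarrow> (\<Sum>i<b. G k i) < \<epsilon> n"
      by (auto simp: eventually_sequentially)
    define a' where "a' = max N (Suc a)"
    obtain M where M: "\<forall>k\<ge>M. norm (\<Sum>i. G a' (i + k)) < \<epsilon> n"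
      using suminf_exist_split[OF eps summ] by blast
    define b' where "b' = max M (Suc b)"
    have "(\<Sum>i. G a' (i + b')) \<le> \<epsilon> n" using M[rule_format, of b'] by (simp add: b'_def)
    moreover have "(\<Sum>i<b. G a' i) \<le> \<epsilon> n" using N[of a'] by (simp add: a'_def)
    ultimately show ?thesis
      by (intro exI[of _ "(a', b')"]) (auto simp: a'_def b'_def)
  qed
  define F where "F n a b = (SOME ab. fst ab > a \<and> snd ab > b \<and> (\<Sum>i<b. G (fst ab) i) \<le> \<epsilon> n
      \<and> (\<Sum>i. G (fst ab) (i + snd ab)) \<le> \<epsilon> n)" for n a b
  have F: "fst (F n a b) > a \<and> snd (F n a b) > b \<and> (\<Sum>i<b. G (fst (F n a b)) i) \<le> \<epsilon> n
      \<and> (\<Sum>i. G (fst (F n a b)) (i + snd (F n a b))) \<le> \<epsilon> n" for n a b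
    unfolding F_def by (rule someI_ex[OF step])
  define s where "s n = fst (iterp F n)" for n
  define m where "m n = (case n of 0 \<Rightarrow> 0 | Suc k \<Rightarrow> snd (iterp F k))" for n
  have it: "\<exists>a. iterp F n = F n a (m n)" for n
    by (cases n) (auto simp: m_def)
  have ms: "m (Suc n) = snd (iterp F n)" for n by (simp add: m_def)
  have "strict_mono s"
  proof (rule strict_monoI_Suc)
    fix n show "s n < s (Suc n)" unfolding s_def iterp.simps using F[where n="Suc n" and a="fst (iterp F n)" and b="snd (iterp F n)"] by blast
  qed
  moreover have "strict_mono m"
  proof (rule strict_monoI_Suc)
    fix n show "m n < m (Suc n)"
    proof -
      obtain a where a: "iterp F n = F n a (m n)" using it by blast
      show ?thesis unfolding ms a using F[where n=n and a=a and b="m n"] by blast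
    qed
  qed
  moreover have "(\<Sum>i<m n. G (s n) i) \<le> \<epsilon> n" for n
  proof -
    obtain a where a: "iterp F n = F n a (m n)" using it by blast
    show ?thesis unfolding s_def a using F[where n=n and a=a and b="m n"] by blast
  qed
  moreover have "(\<Sum>i. G (s n) (i + m (Suc n))) \<le> \<epsilon> n" for n
  proof -
    obtain a where a: "iterp F n = F n a (m n)" using it by blast
    show ?thesis unfolding s_def ms a using F[where n=n and a=a and b="m n"] by blast
  qed
  moreover have "m 0 = 0" by (simp add: m_def)
  ultimately show ?thesis by blast
qed


lemma self_bound:
  fixes S A p :: real
  assumes p: "1 < p" and S: "0 \<le> S" and A: "0 \<le> A" and le: "S \<le> A * S powr (1/p)"
  shows "S \<le> A powr (p/(p-1))"
proof (cases "S = 0")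
  case True thus ?thesis by simp
next
  case False
  hence S1: "S > 0" using S by simp
  have e: "S = S powr (1/p) * S powr (1 - 1/p)"
    using S1 by (simp add: powr_add[symmetric])
  have pos: "S powr (1/p) > 0" using S1 by simp
  have "S powr (1/p) * S powr (1 - 1/p) \<le> S powr (1/p) * A"
    using le e by (simp add: mult.commute)
  hence h: "S powr (1 - 1/p) \<le> A" using pos by simp
  have ex: "(1 - 1/p) * (p/(p-1)) = 1" using p by (simp add: field_simps)
  have "S = S powr 1" using S1 by simp
  also have "\<dots> = (S powr (1 - 1/p)) powr (p/(p-1))"
    by (simp only: powr_powr ex)
  also have "\<dots> \<le> A powr (p/(p-1))"
    using h p by (intro powr_mono2) auto
  finally show ?thesis .
qed

lemma powr_sum_disj:
  fixes a :: "nat \<Rightarrow> real"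
  assumes "\<And>n n'. n \<noteq> n' \<Longrightarrow> a n = 0 \<or> a n' = 0"
  shows "\<bar>\<Sum>n<N. a n\<bar> powr p = (\<Sum>n<N. \<bar>a n\<bar> powr p)"
proof (induction N)
  case 0 thus ?case by simp
next
  case (Suc N)
  show ?case
  proof (cases "a N = 0")
    case True thus ?thesis using Suc by simp
  next
    case False
    hence "\<forall>n<N. a n = 0" using assms by (metis less_irrefl)
    thus ?thesis by simp
  qed
qed

lemma pow_le_sq:
  fixes t K p :: real
  assumes p: "2 \<le> p" and t: "\<bar>t\<bar> \<le> K"
  shows "\<bar>t\<bar> powr p \<le> K powr (p - 2) * (t * t)"
proof (cases "t = 0")
  case True thus ?thesis using p by simp
next
  case False
  have "\<bar>t\<bar> powr p = \<bar>t\<bar> powr ((p - 2) + 2)" by simp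
  also have "\<dots> = \<bar>t\<bar> powr (p - 2) * \<bar>t\<bar> powr 2" by (rule powr_add)
  also have "\<bar>t\<bar> powr 2 = t * t" using False by (simp add: powr_numeral power2_eq_square)
  also have "\<bar>t\<bar> powr (p - 2) \<le> K powr (p - 2)"
    using p t by (intro powr_mono2) auto
  finally show ?thesis by (simp add: mult_right_mono)
qed

lemma block_lemma:
  fixes b :: "nat \<Rightarrow> nat \<Rightarrow> real" and m :: "nat \<Rightarrow> nat" and p D :: real
  assumes p2: "2 \<le> p" and phi: "\<phi> \<in> lp_dual p" and m: "strict_mono m"
    and supp: "\<And>n i. i < m n \<or> m (Suc n) \<le> i \<Longrightarrow> b n i = 0"
    and blp: "\<And>n. b n \<in> lp p" and bd: "\<And>n. psum p (b n) \<le> D"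
  shows "summable (\<lambda>n. \<bar>\<phi> (b n)\<bar> powr p)"
proof -
  have p0: "p > 0" and p1: "p > 1" using p2 by auto
  have D0: "D \<ge> 0" using psum_nonneg[OF blp[of 0]] bd[of 0] by simp
  obtain C where C0: "C \<ge> 0" and C: "\<And>x. x \<in> lp p \<Longrightarrow> \<bar>\<phi> x\<bar> \<le> C * psum p x powr (1/p)"
    using dual_bound[OF phi] by blast
  define t where "t n = \<phi> (b n)" for n
  define K where "K = C * D powr (1/p)"
  have tK: "\<bar>t n\<bar> \<le> K" for n
  proof -
    have "\<bar>t n\<bar> \<le> C * psum p (b n) powr (1/p)" using C[OF blp] by (simp add: t_def)
    also have "\<dots> \<le> C * D powr (1/p)"
      using bd[of n] psum_nonneg[OF blp[of n]] C0 p0 by (intro mult_left_mono powr_mono2) auto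
    finally show ?thesis by (simp add: K_def)
  qed
  have K0: "K \<ge> 0" using C0 D0 by (simp add: K_def)
  define A where "A = K powr (p - 2) * C * D powr (1/p)"
  have A0: "A \<ge> 0" using K0 C0 D0 by (simp add: A_def)
  have disj: "b n i = 0 \<or> b n' i = 0" if "n \<noteq> n'" for n n' i
  proof -
    have "b n i = 0 \<or> b n' i = 0" if "n < n'" for n n'
    proof -
      have "m (Suc n) \<le> m n'" using that m by (simp add: strict_mono_less_eq)
      thus ?thesis using supp[where n=n and i=i] supp[where n=n' and i=i] by linarith
    qed
    thus ?thesis using \<open>n \<noteq> n'\<close> by (metis linorder_neqE_nat)
  qed
  have bound: "(\<Sum>n<N. \<bar>t n\<bar> powr p) \<le> A powr (p/(p-1))" for N
  proof -
    define S where "S = (\<Sum>n<N. \<bar>t n\<bar> powr p)"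
    define z where "z = (\<lambda>i. \<Sum>n<N. t n * b n i)"
    have zz: "z \<in> lp p \<and> \<phi> z = (\<Sum>n<N. t n * \<phi> (b n))"
      unfolding z_def by (rule dual_sum[OF p0 phi blp])
    have tb: "(\<lambda>i. t n * b n i) \<in> lp p" for n using lp_scale(1)[OF blp] .
    have "psum p z = (\<Sum>i. \<Sum>n<N. \<bar>t n * b n i\<bar> powr p)"
      unfolding psum_def z_def
      by (intro suminf_cong powr_sum_disj) (use disj in auto)
    also have "\<dots> = (\<Sum>n<N. \<Sum>i. \<bar>t n * b n i\<bar> powr p)"
      by (rule suminf_sum) (use tb in \<open>auto simp: lp_def\<close>)
    also have "\<dots> = (\<Sum>n<N. \<bar>t n\<bar> powr p * psum p (b n))"
      using lp_scale(2)[OF blp] by (simp add: psum_def)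
    also have "\<dots> \<le> (\<Sum>n<N. \<bar>t n\<bar> powr p * D)"
      by (intro sum_mono mult_left_mono bd) auto
    finally have pz: "psum p z \<le> D * S" by (simp add: S_def sum_distrib_left mult.commute)
    have S0: "S \<ge> 0" by (simp add: S_def sum_nonneg)
    have "S \<le> (\<Sum>n<N. K powr (p - 2) * (t n * t n))"
      unfolding S_def by (intro sum_mono pow_le_sq p2 tK)
    also have "\<dots> = K powr (p - 2) * \<phi> z"
      using zz by (simp add: sum_distrib_left t_def)
    also have "\<dots> \<le> K powr (p - 2) * (C * psum p z powr (1/p))"
      using C[of z] zz by (intro mult_left_mono) auto
    also have "\<dots> \<le> K powr (p - 2) * (C * (D * S) powr (1/p))"
      using pz psum_nonneg[of z p] zz C0 p0 by (intro mult_left_mono powr_mono2) auto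
    also have "\<dots> = A * S powr (1/p)"
      using D0 S0 by (simp add: A_def powr_mult)
    finally have "S \<le> A * S powr (1/p)" .
    thus ?thesis using self_bound[OF p1 S0 A0] by (simp add: S_def)
  qed
  show ?thesis
    by (rule summableI_nonneg_bounded[where x="A powr (p/(p-1))"])
       (use bound in \<open>auto simp: t_def\<close>)
qed


lemma summable_subseq:
  fixes f :: "nat \<Rightarrow> real"
  assumes k: "strict_mono k" and f0: "\<And>n. f n \<ge> 0" and f: "summable f"
  shows "summable (\<lambda>n. f (k n))"
proof -
  define f' where "f' n = (if n \<in> range k then f n else 0)" for n
  have "summable f'"
    by (rule summable_comparison_test'[OF f, of 0]) (auto simp: f'_def f0)
  hence "summable (\<lambda>n. f' (k n))"
    using summable_mono_reindex[OF k, of f'] by (auto simp: f'_def)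
  thus ?thesis by (simp add: f'_def)
qed

lemma sum_if_less:
  fixes f :: "nat \<Rightarrow> real"
  shows "(\<Sum>i<k. if i < a then f i else 0) = (\<Sum>i<min a k. f i)"
  by (induction k) (auto simp: min_def le_Suc_eq)

lemma sufficiency:
  fixes p :: real
  assumes p2: "2 \<le> p"
  shows "lp_wCSP p p"
  unfolding lp_wCSP_def
proof (intro allI impI)
  fix x :: "nat \<Rightarrow> nat \<Rightarrow> real"
  assume xlp: "\<forall>n. x n \<in> lp p" and "\<exists>M. \<forall>n. lp_norm p (x n) \<le> M"
  then obtain M where M: "\<And>n. lp_norm p (x n) \<le> M" by blast
  have p0: "p > 0" using p2 by simp
  define B where "B = M powr p"
  have Pb: "psum p (x n) \<le> B" for n
  proof -
    have "psum p (x n) = (lp_norm p (x n)) powr p"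
      using psum_nonneg[of "x n" p] xlp p0 by (simp add: lp_norm_psum powr_powr)
    also have "\<dots> \<le> M powr p"
      using M[of n] p0 by (intro powr_mono2) (auto simp: lp_norm_psum)
    finally show ?thesis by (simp add: B_def)
  qed
  have cb: "\<bar>x n i\<bar> \<le> B powr (1/p)" for n i
  proof -
    have "\<bar>x n i\<bar> = (\<bar>x n i\<bar> powr p) powr (1/p)" using p0 by (simp add: powr_powr)
    also have "\<dots> \<le> B powr (1/p)"
      using psum_term_le[of "x n" p i] xlp Pb[of n] p0 by (intro powr_mono2) auto
    finally show ?thesis .
  qed
  obtain r0 where r0: "strict_mono r0" and cv: "\<And>i. convergent (\<lambda>n. x (r0 n) i)"
    using diag_conv[of x] cb by blast
  define z where "z i = lim (\<lambda>n. x (r0 n) i)" for i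
  have conv: "(\<lambda>n. x (r0 n) i) \<longlonglongrightarrow> z i" for i
    using cv[of i] by (simp add: z_def convergent_LIMSEQ_iff)
  have powconv: "(\<lambda>n. \<bar>f n\<bar> powr p) \<longlonglongrightarrow> \<bar>l\<bar> powr p" if "f \<longlonglongrightarrow> l" for f l
    by (rule tendsto_powr'[OF tendsto_rabs[OF that] tendsto_const]) (use p0 in auto)
  have zpart: "(\<Sum>i<N. \<bar>z i\<bar> powr p) \<le> B" for N
  proof -
    have "(\<lambda>n. \<Sum>i<N. \<bar>x (r0 n) i\<bar> powr p) \<longlonglongrightarrow> (\<Sum>i<N. \<bar>z i\<bar> powr p)"
      by (intro tendsto_sum powconv conv)
    moreover have "(\<Sum>i<N. \<bar>x (r0 n) i\<bar> powr p) \<le> B" for n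
      using psum_partial_le[of "x (r0 n)" p N] xlp Pb[of "r0 n"] by auto
    ultimately show ?thesis by (intro LIMSEQ_le_const2) auto
  qed
  have zlp: "z \<in> lp p" unfolding lp_def
    by (auto intro!: summableI_nonneg_bounded[where x=B] zpart)
  have Pz: "psum p z \<le> B"
    unfolding psum_def using zlp by (intro suminf_le_const zpart) (auto simp: lp_def)
  define y where "y n = (\<lambda>i. x (r0 n) i - z i)" for n
  define D where "D = 2 powr p * (B + B)"
  have ylp: "y n \<in> lp p" for n unfolding y_def using lp_diff(1)[OF p0 _ zlp] xlp by blast
  have Py: "psum p (y n) \<le> D" for n
  proof -
    have "psum p (y n) \<le> 2 powr p * (psum p (x (r0 n)) + psum p z)"
      unfolding y_def using lp_diff(2)[OF p0 _ zlp] xlp by blast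
    also have "\<dots> \<le> D" unfolding D_def using Pb[of "r0 n"] Pz
      by (intro mult_left_mono) auto
    finally show ?thesis .
  qed
  have ynull: "(\<lambda>n. y n i) \<longlonglongrightarrow> 0" for i
    using tendsto_diff[OF conv[of i] tendsto_const[of "z i"]] by (simp add: y_def)
  define \<epsilon> :: "nat \<Rightarrow> real" where "\<epsilon> n = (1/2) ^ n" for n
  obtain s m where s: "strict_mono s" and m: "strict_mono m" and m0: "m 0 = 0"
    and h1: "\<And>n. (\<Sum>i<m n. \<bar>y (s n) i\<bar> powr p) \<le> \<epsilon> n"
    and h2: "\<And>n. (\<Sum>i. \<bar>y (s n) (i + m (Suc n))\<bar> powr p) \<le> \<epsilon> n"
  proof -
    have "\<exists>s m. strict_mono s \<and> strict_mono m \<and> m 0 = 0 \<and>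
     (\<forall>n. (\<Sum>i<m n. \<bar>y (s n) i\<bar> powr p) \<le> \<epsilon> n) \<and> (\<forall>n. (\<Sum>i. \<bar>y (s n) (i + m (Suc n))\<bar> powr p) \<le> \<epsilon> n)"
    proof (rule hump)
      show "summable (\<lambda>i. \<bar>y n i\<bar> powr p)" for n using ylp[of n] by (simp add: lp_def)
      show "(\<lambda>n. \<bar>y n i\<bar> powr p) \<longlonglongrightarrow> 0" for i using powconv[OF ynull[of i]] p0 by simp
      show "\<epsilon> n > 0" for n by (simp add: \<epsilon>_def)
    qed
    thus ?thesis using that by blast
  qed
  define w where "w n = y (s n)" for n
  define b where "b n = (\<lambda>i. if m n \<le> i \<and> i < m (Suc n) then w n i else 0)" for n
  have wlp: "w n \<in> lp p" for n using ylp by (simp add: w_def)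
  have blp: "b n \<in> lp p" and Pb_eq: "psum p (b n) = (\<Sum>i<m (Suc n). \<bar>b n i\<bar> powr p)" for n
    using lp_finite[of "m (Suc n)" "b n", OF _ p0] by (auto simp: b_def)
  have Pbb: "psum p (b n) \<le> D" for n
  proof -
    have "psum p (b n) \<le> (\<Sum>i<m (Suc n). \<bar>w n i\<bar> powr p)"
      unfolding Pb_eq by (intro sum_mono) (auto simp: b_def)
    also have "\<dots> \<le> psum p (w n)" by (rule psum_partial_le[OF wlp])
    also have "\<dots> \<le> D" using Py by (simp add: w_def)
    finally show ?thesis .
  qed
  have supp: "b n i = 0" if "i < m n \<or> m (Suc n) \<le> i" for n i
    using that by (auto simp: b_def)
  define d where "d n = (\<lambda>i. w n i - b n i)" for n
  have dlp: "d n \<in> lp p" for n unfolding d_def by (rule lp_diff(1)[OF p0 wlp blp])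
  have Pd: "psum p (d n) \<le> 2 * \<epsilon> n" for n
  proof -
    define k where "k = m (Suc n)"
    have mk: "m n \<le> k" using m by (simp add: k_def strict_mono_less_eq)
    have sd: "summable (\<lambda>i. \<bar>d n i\<bar> powr p)" using dlp by (simp add: lp_def)
    have dv: "d n i = (if m n \<le> i \<and> i < m (Suc n) then 0 else w n i)" for i
      by (simp add: d_def b_def)
    have "psum p (d n) = (\<Sum>i. \<bar>d n (i + k)\<bar> powr p) + (\<Sum>i<k. \<bar>d n i\<bar> powr p)"
      unfolding psum_def by (rule suminf_split_initial_segment[OF sd])
    also have "(\<Sum>i. \<bar>d n (i + k)\<bar> powr p) = (\<Sum>i. \<bar>y (s n) (i + m (Suc n))\<bar> powr p)"
      by (simp add: dv k_def w_def)
    also have "(\<Sum>i<k. \<bar>d n i\<bar> powr p) = (\<Sum>i<k. if i < m n then \<bar>y (s n) i\<bar> powr p else 0)"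
      by (intro sum.cong) (auto simp: dv k_def w_def)
    also have "\<dots> = (\<Sum>i<m n. \<bar>y (s n) i\<bar> powr p)"
      using mk by (simp add: sum_if_less min_def)
    finally show ?thesis using h1[of n] h2[of n] by simp
  qed
  have Sw: "summable (\<lambda>n. \<bar>\<phi> (w n)\<bar> powr p)" if phi: "\<phi> \<in> lp_dual p" for \<phi>
  proof -
    obtain C where C0: "C \<ge> 0" and C: "\<And>x. x \<in> lp p \<Longrightarrow> \<bar>\<phi> x\<bar> \<le> C * psum p x powr (1/p)"
      using dual_bound[OF phi] by blast
    have Sb: "summable (\<lambda>n. \<bar>\<phi> (b n)\<bar> powr p)"
      by (rule block_lemma[OF p2 phi m supp blp Pbb])
    have dd: "\<bar>\<phi> (w n) - \<phi> (b n)\<bar> powr p \<le> C powr p * (2 * \<epsilon> n)" for n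
    proof -
      have e: "\<phi> (d n) = \<phi> (w n) - \<phi> (b n)"
        unfolding d_def by (rule dual_diff[OF p0 phi wlp blp])
      have P0: "psum p (d n) \<ge> 0" by (rule psum_nonneg[OF dlp])
      have "\<bar>\<phi> (d n)\<bar> powr p \<le> (C * psum p (d n) powr (1/p)) powr p"
        using C[OF dlp] p0 by (intro powr_mono2) auto
      also have "\<dots> = C powr p * psum p (d n)"
        using C0 P0 p0 by (simp add: powr_mult powr_powr)
      also have "\<dots> \<le> C powr p * (2 * \<epsilon> n)"
        using Pd[of n] by (intro mult_left_mono) auto
      finally show ?thesis using e by simp
    qed
    have Se: "summable (\<lambda>n. C powr p * (2 * \<epsilon> n))"
      by (intro summable_mult summable_geometric) (simp add: \<epsilon>_def)
    have Sdd: "summable (\<lambda>n. \<bar>\<phi> (w n) - \<phi> (b n)\<bar> powr p)"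
      by (rule summable_comparison_test'[OF Se, of 0]) (use dd in auto)
    have S2: "summable (\<lambda>n. 2 powr p * (\<bar>\<phi> (b n)\<bar> powr p + \<bar>\<phi> (w n) - \<phi> (b n)\<bar> powr p))"
      by (intro summable_mult summable_add Sb Sdd)
    show ?thesis
    proof (rule summable_comparison_test'[OF S2, of 0])
      fix n
      show "norm (\<bar>\<phi> (w n)\<bar> powr p) \<le> 2 powr p * (\<bar>\<phi> (b n)\<bar> powr p + \<bar>\<phi> (w n) - \<phi> (b n)\<bar> powr p)"
        using powr_add_le[OF p0, of "\<phi> (b n)" "\<phi> (w n) - \<phi> (b n)"] by simp
    qed
  qed
  show "\<exists>r. strict_mono r \<and> weakly_Cauchy p p (x \<circ> r)"
  proof (intro exI conjI)
    show "strict_mono (r0 \<circ> s)" using r0 s by (rule strict_mono_o)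
    show "weakly_Cauchy p p (x \<circ> (r0 \<circ> s))"
      unfolding weakly_Cauchy_def weakly_summable_def
    proof (intro allI impI ballI)
      fix k j :: "nat \<Rightarrow> nat" and \<phi>
      assume k: "strict_mono k" and j: "strict_mono j" and phi: "\<phi> \<in> lp_dual p"
      have ev: "(\<lambda>i. (x \<circ> (r0 \<circ> s)) (k n) i - (x \<circ> (r0 \<circ> s)) (j n) i) = (\<lambda>i. w (k n) i - w (j n) i)" for n
        by (simp add: w_def y_def)
      have val: "\<phi> (\<lambda>i. (x \<circ> (r0 \<circ> s)) (k n) i - (x \<circ> (r0 \<circ> s)) (j n) i) = \<phi> (w (k n)) - \<phi> (w (j n))" for n
        unfolding ev by (rule dual_diff[OF p0 phi wlp wlp])
      have S1: "summable (\<lambda>n. \<bar>\<phi> (w (k n))\<bar> powr p)"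
        by (rule summable_subseq[OF k _ Sw[OF phi]]) simp
      have S2: "summable (\<lambda>n. \<bar>\<phi> (w (j n))\<bar> powr p)"
        by (rule summable_subseq[OF j _ Sw[OF phi]]) simp
      have S3: "summable (\<lambda>n. 2 powr p * (\<bar>\<phi> (w (k n))\<bar> powr p + \<bar>\<phi> (w (j n))\<bar> powr p))"
        by (intro summable_mult summable_add S1 S2)
      show "summable (\<lambda>n. \<bar>\<phi> (\<lambda>i. (x \<circ> (r0 \<circ> s)) (k n) i - (x \<circ> (r0 \<circ> s)) (j n) i)\<bar> powr p)"
        unfolding val
      proof (rule summable_comparison_test'[OF S3, of 0])
        fix n
        show "norm (\<bar>\<phi> (w (k n)) - \<phi> (w (j n))\<bar> powr p) \<le> 2 powr p * (\<bar>\<phi> (w (k n))\<bar> powr p + \<bar>\<phi> (w (j n))\<bar> powr p)"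
          using powr_diff_le[OF p0] by simp
      qed
    qed
  qed
qed


theorem propositionp:
  fixes p :: real
  assumes "1 < p"
  shows "lp_wCSP p p \<longleftrightarrow> p \<ge> 2"
proof
  assume "lp_wCSP p p"
  thus "p \<ge> 2" using necessity[OF assms] by (cases "p < 2") auto
next
  assume "p \<ge> 2"
  thus "lp_wCSP p p" by (rule sufficiency)
qed

end
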